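(* Let $(\mathcal{X},\rho,\nu)$ be a metric measure space with $\rho$ separable and $\nu$ a finite Borel measure. Let $c$ be a concept whose boundary $\partial\mathcal{X}$ satisfies $\nu(\partial\mathcal{X})=0$, and let the $\nu$-dominated adversary have smoothness rate $\epsilon$. Fix $p>0$. Then with probability at least $1-p$, the 1-nearest neighbor rule satisfies, simultaneously for all $T\in\mathbb{N}$, $$\#\mathrm{mistakes}_T\le\min\left\{T,\ \inf_{V\subset\mathcal{X}}\ \mathcal{N}_{\mathrm{ML}}(V)+T\,\epsilon\big(\nu(V^c)\big)+\sqrt{2T\log\frac{2T}{p}}\right\},$$ where the infimum is over measurable $V$.
   Context: Protocol: adversary fixes $c:\mathcal{X}\to\mathcal{Y}$; at each $t$ it picks a distribution $\mu_t$ (possibly history-dependent), draws $x_t\sim\mu_t$; the 1-nearest neighbor rule predicts $\hat y_t=c(x_{\mathrm{NN}_t})$ with $\mathrm{NN}_t\in\arg\min_{\tau<t}\rho(x_t,x_\tau)$ (ties arbitrary). $\#\mathrm{mistakes}_T=\sum_{t=1}^T\mathbb{1}\{\hat y_t\ne c(x_t)\}$. Margin $m_c(x)=\inf_{x':c(x')\neq c(x)}\rho(x,x')$; $\partial\mathcal{X}=\{x:m_c(x)=0\}$. A set $U$ is mutually-labeling if $\rho(x,x')<m_c(x)$ for all $x,x'\in U$; $\mathcal{N}_{\mathrm{ML}}(V)$ is the minimal number of mutually-labeling sets needed to cover $V$. An adversary has smoothness rate $\epsilon:\mathbb{R}_{\ge0}\to[0,1]$ if every distribution $\mu$ it can select satisfies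 $\mu(A)\le\epsilon(\nu(A))$ for all measurable $A$; it is $\nu$-dominated if moreover $\lim_{\delta\to0}\epsilon(\delta)=0$. *)

theory Defs
  imports "HOL-Probability.Probability"
begin

definition margin :: "('a::metric_space \<Rightarrow> 'b) \<Rightarrow> 'a \<Rightarrow> ereal" where
  "margin c x = Inf {ereal (dist x x') | x'. c x' \<noteq> c x}"

definition boundary :: "('a::metric_space \<Rightarrow> 'b) \<Rightarrow> 'a set" where
  "boundary c = {x. margin c x = 0}"

definition mutually_labeling :: "('a::metric_space \<Rightarrow> 'b) \<Rightarrow> 'a set \<Rightarrow> bool" where
  "mutually_labeling c U \<longleftrightarrow> (\<forall>x\<in>U. \<forall>x'\<in>U. ereal (dist x x') < margin c x)"

definition N_ML :: "('a::metric_space \<Rightarrow> 'b) \<Rightarrow> 'a set \<Rightarrow> enat" where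
  "N_ML c V = Inf {enat (card F) | F. finite F \<and> (\<forall>U\<in>F. mutually_labeling c U) \<and> V \<subseteq> \<Union>F}"

definition history :: "(nat \<Rightarrow> 'w \<Rightarrow> 'a) \<Rightarrow> nat \<Rightarrow> 'w \<Rightarrow> (nat \<Rightarrow> 'a)" where
  "history X t \<omega> = (\<lambda>i\<in>{..<t}. X i \<omega>)"

text \<open>Number of mistakes of 1-NN in rounds 0..T-1 (round 0 = the paper's round 1 has no
  previous point and is counted as a mistake).\<close>
definition mistakes ::
  "('a \<Rightarrow> 'b) \<Rightarrow> (nat \<Rightarrow> 'w \<Rightarrow> 'a) \<Rightarrow> (nat \<Rightarrow> 'w \<Rightarrow> nat) \<Rightarrow> nat \<Rightarrow> 'w \<Rightarrow> nat" where
  "mistakes c X nn T \<omega> = card {t. t < T \<and> (t = 0 \<or> c (X (nn t \<omega>) \<omega>) \<noteq> c (X t \<omega>))}"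

end

theory Submission
  imports Defs
begin


locale nnset = prob_space M for M :: "'w measure" +
  fixes X :: "nat \<Rightarrow> 'w \<Rightarrow> 'a::metric_space"
    and K :: "nat \<Rightarrow> (nat \<Rightarrow> 'a) \<Rightarrow> 'a measure"
    and A :: "'a set" and q :: real
  assumes X_meas: "\<And>t. X t \<in> measurable M borel"
    and A_borel: "A \<in> sets borel"
    and Kq: "\<And>t h. h \<in> space (PiM {..<t} (\<lambda>_. borel)) \<Longrightarrow> measure (K t h) A \<le> q"
    and q0: "0 \<le> q"
    and X_law: "\<And>t A B. A \<in> sets borel \<Longrightarrow> B \<in> sets (PiM {..<t} (\<lambda>_. borel)) \<Longrightarrow>
                   measure M {\<omega> \<in> space M. X t \<omega> \<in> A \<and> history X t \<omega> \<in> B}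
                   = (\<integral>\<omega>. indicator B (history X t \<omega>) * measure (K t (history X t \<omega>)) A \<partial>M)"
begin

definition Sm :: "nat \<Rightarrow> 'w \<Rightarrow> real" where
  "Sm t \<omega> = real (card {i\<in>{..<t}. X i \<omega> \<in> A})"

definition fh :: "nat \<Rightarrow> (nat \<Rightarrow> 'a) \<Rightarrow> real" where
  "fh t h = real (card {i\<in>{..<t}. h i \<in> A})"

lemma fh_sum: "fh t h = (\<Sum>i<t. indicator A (h i))"
proof (induction t)
  case 0 then show ?case by (simp add: fh_def)
next
  case (Suc t)
  have "{i\<in>{..<Suc t}. h i \<in> A} = {i\<in>{..<t}. h i \<in> A} \<union> (if h t \<in> A then {t} else {})"
    using less_Suc_eq by auto
  then have "fh (Suc t) h = fh t h + indicator A (h t)"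
    unfolding fh_def by (auto simp: indicator_def card_insert_if)
  then show ?case using Suc by simp
qed

lemma fh_meas: "fh t \<in> borel_measurable (PiM {..<t} (\<lambda>_. borel))"
  unfolding fh_sum[abs_def] using A_borel
  by (intro borel_measurable_sum) (auto intro!: measurable_compose[OF measurable_component_singleton] borel_measurable_indicator)

lemma hist_meas: "history X t \<in> measurable M (PiM {..<t} (\<lambda>_. borel))"
  unfolding history_def[abs_def] using X_meas by (intro measurable_restrict) auto

lemma Sm_hist: "Sm t \<omega> = fh t (history X t \<omega>)"
  unfolding Sm_def fh_def history_def by (intro arg_cong[where f="\<lambda>S. real (card S)"]) auto

lemma Sm_meas: "Sm t \<in> borel_measurable M"
  unfolding Sm_hist[abs_def] using fh_meas hist_meas by (rule measurable_compose[rotated])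

lemma Sm_le: "Sm t \<omega> \<le> t"
proof -
  have "card {i\<in>{..<t}. X i \<omega> \<in> A} \<le> card {..<t}" by (intro card_mono) auto
  thus ?thesis unfolding Sm_def by simp
qed

lemma Sm_Suc: "Sm (Suc t) \<omega> = Sm t \<omega> + indicator A (X t \<omega>)"
proof -
  have "Sm (Suc t) \<omega> = fh (Suc t) (\<lambda>i. X i \<omega>)" "Sm t \<omega> = fh t (\<lambda>i. X i \<omega>)"
    unfolding Sm_def fh_def by simp_all
  thus ?thesis unfolding fh_sum by simp
qed


lemma law_bound:
  assumes B: "B \<in> sets (PiM {..<t} (\<lambda>_. borel))"
  shows "measure M {\<omega> \<in> space M. X t \<omega> \<in> A \<and> history X t \<omega> \<in> B}
         \<le> q * measure M {\<omega> \<in> space M. history X t \<omega> \<in> B}"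
proof -
  have S: "{\<omega> \<in> space M. history X t \<omega> \<in> B} \<in> sets M"
    using measurable_sets[OF hist_meas B] by (simp add: vimage_def Int_def conj_commute)
  have "measure M {\<omega> \<in> space M. X t \<omega> \<in> A \<and> history X t \<omega> \<in> B}
      = (\<integral>\<omega>. indicator B (history X t \<omega>) * measure (K t (history X t \<omega>)) A \<partial>M)"
    by (rule X_law[OF A_borel B])
  also have "\<dots> \<le> (\<integral>\<omega>. q * indicator {\<omega> \<in> space M. history X t \<omega> \<in> B} \<omega> \<partial>M)"
  proof (rule integral_mono')
    show "integrable M (\<lambda>\<omega>. q * indicator {\<omega> \<in> space M. history X t \<omega> \<in> B} \<omega>)"
      using S by (intro integrable_mult_right integrable_real_indicator) (auto simp: less_top[symmetric])
    fix \<omega> assume w: "\<omega> \<in> space M"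
    have h: "history X t \<omega> \<in> space (PiM {..<t} (\<lambda>_. borel))"
      using measurable_space[OF hist_meas w] .
    show "indicator B (history X t \<omega>) * measure (K t (history X t \<omega>)) A
          \<le> q * indicator {\<omega> \<in> space M. history X t \<omega> \<in> B} \<omega>"
      using Kq[OF h] w by (auto simp: indicator_def)
    show "0 \<le> q * indicator {\<omega> \<in> space M. history X t \<omega> \<in> B} \<omega>"
      using q0 by simp
  qed
  also have "\<dots> = q * measure M {\<omega> \<in> space M. history X t \<omega> \<in> B}"
    using S by (simp add: Int_absorb2 sets.sets_into_space)
  finally show ?thesis .
qed

lemma int_sum_ind:
  assumes "finite I" "\<And>k. k \<in> I \<Longrightarrow> C k \<in> sets M" "\<And>k. k \<in> I \<Longrightarrow> D k \<in> sets M"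
  shows "(\<integral>\<omega>. (\<Sum>k\<in>I. a k * indicator (C k) \<omega> + b k * indicator (D k) \<omega>) \<partial>M)
       = (\<Sum>k\<in>I. a k * measure M (C k) + b k * measure M (D k))"
proof -
  have "(\<integral>\<omega>. (\<Sum>k\<in>I. a k * indicator (C k) \<omega> + b k * indicator (D k) \<omega>) \<partial>M)
     = (\<Sum>k\<in>I. (\<integral>\<omega>. a k * indicator (C k) \<omega> + b k * indicator (D k) \<omega> \<partial>M))"
    using assms by (intro Bochner_Integration.integral_sum[where f="\<lambda>k \<omega>. a k * indicator (C k) \<omega> + b k * indicator (D k) \<omega>"])
       (auto intro!: integrable_mult_right integrable_real_indicator simp: less_top[symmetric])
  also have "\<dots> = (\<Sum>k\<in>I. a k * measure M (C k) + b k * measure M (D k))"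
  proof (rule sum.cong[OF refl])
    fix k assume k: "k \<in> I"
    have iC: "integrable M (\<lambda>\<omega>. a k * indicator (C k) \<omega>)" and iD: "integrable M (\<lambda>\<omega>. b k * indicator (D k) \<omega>)"
      using assms k by (auto intro!: integrable_mult_right integrable_real_indicator simp: less_top[symmetric])
    show "(\<integral>\<omega>. a k * indicator (C k) \<omega> + b k * indicator (D k) \<omega> \<partial>M) = a k * measure M (C k) + b k * measure M (D k)"
      using assms k by (simp add: Bochner_Integration.integral_add[OF iC iD] Int_absorb2 sets.sets_into_space)
  qed
  finally show ?thesis .
qed


definition "Bs t k = {h\<in>space (PiM {..<t} (\<lambda>_. borel)). fh t h = real k}"
definition "Cs t k = {\<omega>\<in>space M. history X t \<omega> \<in> Bs t k}"
definition "Ds t k = {\<omega>\<in>space M. X t \<omega> \<in> A \<and> history X t \<omega> \<in> Bs t k}"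

lemma Bs_sets: "Bs t k \<in> sets (PiM {..<t} (\<lambda>_. borel))"
  unfolding Bs_def using fh_meas[of t] by measurable

lemma Cs_sets: "Cs t k \<in> sets M"
  unfolding Cs_def using measurable_sets[OF hist_meas Bs_sets]
  by (simp add: vimage_def Int_def conj_commute)

lemma Ds_sets: "Ds t k \<in> sets M"
proof -
  have "Ds t k = (X t -` A \<inter> space M) \<inter> Cs t k" unfolding Ds_def Cs_def by auto
  thus ?thesis using measurable_sets[OF X_meas A_borel] Cs_sets by auto
qed

lemma ind_Cs: "\<omega> \<in> space M \<Longrightarrow> indicator (Cs t k) \<omega> = (if Sm t \<omega> = real k then 1 else (0::real))"
  using measurable_space[OF hist_meas]
  unfolding Cs_def Bs_def Sm_hist by (auto simp: indicator_def)

lemma ind_Ds: "\<omega> \<in> space M \<Longrightarrow> indicator (Ds t k) \<omega> = (if Sm t \<omega> = real k then indicator A (X t \<omega>) else (0::real))"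
  using measurable_space[OF hist_meas]
  unfolding Ds_def Bs_def Sm_hist by (auto simp: indicator_def)

lemma sum_delta_real:
  assumes "x = real m" "m \<le> t"
  shows "(\<Sum>k\<in>{..t}. g k * (if x = real k then c else 0)) = g m * (c::real)"
proof -
  have "(\<Sum>k\<in>{..t}. g k * (if x = real k then c else 0)) = (\<Sum>k\<in>{..t}. if k = m then g k * c else 0)"
    using assms by (intro sum.cong) auto
  also have "\<dots> = g m * c" using assms by simp
  finally show ?thesis .
qed

lemma Sm_nat: "\<exists>m. Sm t \<omega> = real m \<and> m \<le> t"
  using Sm_le[of t \<omega>] unfolding Sm_def by auto

lemma mgf_step:
  assumes l: "0 \<le> l"
  shows "(\<integral>\<omega>. exp (l * Sm (Suc t) \<omega>) \<partial>M) \<le> (1 + q * (exp l - 1)) * (\<integral>\<omega>. exp (l * Sm t \<omega>) \<partial>M)"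
proof -
  have p1: "exp (l * Sm t \<omega>) = (\<Sum>k\<in>{..t}. exp (l * k) * indicator (Cs t k) \<omega> + 0 * indicator (Ds t k) \<omega>)"
    if w: "\<omega> \<in> space M" for \<omega>
  proof -
    obtain m where m: "Sm t \<omega> = real m" "m \<le> t" using Sm_nat by blast
    show ?thesis using sum_delta_real[OF m, of "\<lambda>k. exp (l * k)" 1] by (simp add: ind_Cs[OF w] m(1))
  qed
  have p2: "exp (l * Sm (Suc t) \<omega>) = (\<Sum>k\<in>{..t}. exp (l * k) * indicator (Cs t k) \<omega> + ((exp l - 1) * exp (l * k)) * indicator (Ds t k) \<omega>)"
    if w: "\<omega> \<in> space M" for \<omega>
  proof -
    obtain m where m: "Sm t \<omega> = real m" "m \<le> t" using Sm_nat by blast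
    have "(\<Sum>k\<in>{..t}. exp (l * k) * indicator (Cs t k) \<omega> + ((exp l - 1) * exp (l * k)) * indicator (Ds t k) \<omega>)
        = (\<Sum>k\<in>{..t}. exp (l * k) * (if Sm t \<omega> = real k then 1 else 0)) + (\<Sum>k\<in>{..t}. ((exp l - 1) * exp (l * k)) * (if Sm t \<omega> = real k then indicator A (X t \<omega>) else 0))"
      by (simp add: ind_Cs[OF w] ind_Ds[OF w] sum.distrib)
    also have "\<dots> = exp (l * m) + (exp l - 1) * exp (l * m) * indicator A (X t \<omega>)"
      using sum_delta_real[OF m, of "\<lambda>k. exp (l * k)" 1] sum_delta_real[OF m, of "\<lambda>k. (exp l - 1) * exp (l * k)" "indicator A (X t \<omega>)"]
      by simp
    also have "\<dots> = exp (l * Sm (Suc t) \<omega>)"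
      unfolding Sm_Suc m(1) by (auto simp: indicator_def distrib_left exp_add algebra_simps)
    finally show ?thesis by simp
  qed
  have "(\<integral>\<omega>. exp (l * Sm (Suc t) \<omega>) \<partial>M) = (\<Sum>k\<in>{..t}. exp (l * k) * measure M (Cs t k) + ((exp l - 1) * exp (l * k)) * measure M (Ds t k))"
    by (subst Bochner_Integration.integral_cong[OF refl p2]) (auto intro!: int_sum_ind Cs_sets Ds_sets)
  also have "\<dots> \<le> (\<Sum>k\<in>{..t}. exp (l * k) * measure M (Cs t k) + ((exp l - 1) * exp (l * k)) * (q * measure M (Cs t k)))"
  proof (intro sum_mono add_left_mono mult_left_mono)
    fix k show "measure M (Ds t k) \<le> q * measure M (Cs t k)"
      using law_bound[OF Bs_sets[of t k]] unfolding Ds_def Cs_def .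
    show "0 \<le> (exp l - 1) * exp (l * k)" using l by simp
  qed
  also have "\<dots> = (1 + q * (exp l - 1)) * (\<Sum>k\<in>{..t}. exp (l * k) * measure M (Cs t k) + 0 * measure M (Ds t k))"
    by (simp add: sum_distrib_left algebra_simps)
  also have "(\<Sum>k\<in>{..t}. exp (l * k) * measure M (Cs t k) + 0 * measure M (Ds t k)) = (\<integral>\<omega>. exp (l * Sm t \<omega>) \<partial>M)"
  proof -
    have "(\<integral>\<omega>. exp (l * Sm t \<omega>) \<partial>M) = (\<Sum>k\<in>{..t}. exp (l * k) * measure M (Cs t k) + 0 * measure M (Ds t k))"
      by (subst Bochner_Integration.integral_cong[OF refl p1]) (simp_all only:, rule int_sum_ind, auto intro: Cs_sets Ds_sets)
    then show ?thesis by (rule sym)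
  qed
  finally show ?thesis .
qed

lemma mgf_bound:
  assumes l: "0 \<le> l"
  shows "(\<integral>\<omega>. exp (l * Sm t \<omega>) \<partial>M) \<le> (1 + q * (exp l - 1)) ^ t"
proof (induction t)
  case 0 then show ?case by (simp add: Sm_def prob_space)
next
  case (Suc t)
  have "0 \<le> 1 + q * (exp l - 1)" using q0 l by simp
  then show ?case using mgf_step[OF l, of t] Suc
    by (smt (verit, best) mult_left_mono power_Suc)
qed


lemma chernoff:
  assumes l: "0 \<le> l"
  shows "measure M {\<omega>\<in>space M. a \<le> Sm t \<omega>} \<le> exp (- l * a) * (1 + q * (exp l - 1)) ^ t"
proof -
  have S: "{\<omega>\<in>space M. a \<le> Sm t \<omega>} \<in> sets M" using Sm_meas[of t] by measurable
  have ie: "integrable M (\<lambda>\<omega>. exp (l * Sm t \<omega>))"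
  proof (rule integrable_const_bound[where B="exp (l * t)"])
    show "AE x in M. norm (exp (l * Sm t x)) \<le> exp (l * t)"
      using Sm_le[of t] l by (auto intro!: AE_I2 mult_left_mono)
    show "(\<lambda>\<omega>. exp (l * Sm t \<omega>)) \<in> borel_measurable M" using Sm_meas[of t] by measurable
  qed
  have "measure M {\<omega>\<in>space M. a \<le> Sm t \<omega>} = (\<integral>\<omega>. indicator {\<omega>\<in>space M. a \<le> Sm t \<omega>} \<omega> \<partial>M)"
    using S by (simp add: Int_absorb2 sets.sets_into_space)
  also have "\<dots> \<le> (\<integral>\<omega>. exp (- l * a) * exp (l * Sm t \<omega>) \<partial>M)"
  proof (rule integral_mono')
    show "integrable M (\<lambda>\<omega>. exp (- l * a) * exp (l * Sm t \<omega>))" using ie by simp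
    fix \<omega> assume "\<omega> \<in> space M"
    have "a \<le> Sm t \<omega> \<Longrightarrow> 1 \<le> exp (- l * a) * exp (l * Sm t \<omega>)"
    proof -
      assume "a \<le> Sm t \<omega>"
      then have "l * a \<le> l * Sm t \<omega>" using l by (rule mult_left_mono)
      then have "0 \<le> - l * a + l * Sm t \<omega>" by simp
      then have "1 \<le> exp (- l * a + l * Sm t \<omega>)" by simp
      moreover have "exp (- l * a + l * Sm t \<omega>) = exp (- l * a) * exp (l * Sm t \<omega>)" by (rule exp_add)
      ultimately show ?thesis by linarith
    qed
    then show "indicator {\<omega>\<in>space M. a \<le> Sm t \<omega>} \<omega> \<le> exp (- l * a) * exp (l * Sm t \<omega>)"
      by (auto simp: indicator_def)
  qed simp
  also have "\<dots> = exp (- l * a) * (\<integral>\<omega>. exp (l * Sm t \<omega>) \<partial>M)" by simp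
  also have "\<dots> \<le> exp (- l * a) * (1 + q * (exp l - 1)) ^ t"
    using mgf_bound[OF l] by (intro mult_left_mono) auto
  finally show ?thesis .
qed

lemma hoeff_tail:
  assumes t: "0 < t" and s: "0 \<le> s"
  shows "measure M {\<omega>\<in>space M. t * q + s \<le> Sm t \<omega>} \<le> exp (- 2 * s^2 / t)"
proof -
  define l where "l = 4 * s / t"
  have l: "0 \<le> l" using s t by (simp add: l_def)
  have "0 \<le> q * (exp l - 1)" using q0 l by simp
  then have pos: "0 < 1 + q * (exp l - 1)" by simp
  have "- l * q + ln (1 + q * (exp l - 1)) \<le> l^2 / 8"
    using Hoeffdings_lemma_aux[OF l q0] by simp
  then have b: "1 + q * (exp l - 1) \<le> exp (l * q + l^2 / 8)"
  proof -
    have "ln (1 + q * (exp l - 1)) \<le> l * q + l^2 / 8" using \<open>- l * q + ln (1 + q * (exp l - 1)) \<le> l^2 / 8\<close> by simp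
    then have "exp (ln (1 + q * (exp l - 1))) \<le> exp (l * q + l^2 / 8)" by simp
    then show ?thesis using pos by simp
  qed
  have "measure M {\<omega>\<in>space M. t * q + s \<le> Sm t \<omega>} \<le> exp (- l * (t * q + s)) * (1 + q * (exp l - 1)) ^ t"
    by (rule chernoff[OF l])
  also have "\<dots> \<le> exp (- l * (t * q + s)) * exp (l * q + l^2 / 8) ^ t"
    using b pos by (intro mult_left_mono power_mono) auto
  also have "\<dots> = exp (- l * (t * q + s) + t * (l * q + l^2 / 8))"
    by (simp only: exp_of_nat_mult[symmetric] exp_add[symmetric])
  also have "- l * (t * q + s) + t * (l * q + l^2 / 8) = - 2 * s^2 / t"
    using t unfolding l_def by (simp add: field_simps power2_eq_square)
  finally show ?thesis .
qed

end



lemma mistakes_cover: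
  fixes X :: "nat \<Rightarrow> 'w \<Rightarrow> 'a::metric_space"
  assumes nn: "\<And>t. 0 < t \<Longrightarrow> nn t \<omega> < t \<and> (\<forall>\<tau><t. dist (X t \<omega>) (X (nn t \<omega>) \<omega>) \<le> dist (X t \<omega>) (X \<tau> \<omega>))"
    and F: "finite F" "\<forall>U\<in>F. mutually_labeling c U" "V \<subseteq> \<Union>F"
  shows "mistakes c X nn T \<omega> \<le> card F + card {i\<in>{..<T}. X i \<omega> \<in> UNIV - V}"
proof -
  define Mi where "Mi = {t. t < T \<and> (t = 0 \<or> c (X (nn t \<omega>) \<omega>) \<noteq> c (X t \<omega>))}"
  define M1 where "M1 = {t\<in>Mi. X t \<omega> \<in> V}"
  define M2 where "M2 = {t\<in>Mi. X t \<omega> \<notin> V}"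
  define g where "g t = (SOME U. U \<in> F \<and> X t \<omega> \<in> U)" for t
  have g: "g t \<in> F \<and> X t \<omega> \<in> g t" if "t \<in> M1" for t
  proof -
    have "\<exists>U. U \<in> F \<and> X t \<omega> \<in> U" using that F(3) unfolding M1_def by blast
    then show ?thesis unfolding g_def by (rule someI_ex)
  qed
  have key: False if t: "t \<in> M1" "t' \<in> M1" "t < t'" "g t = g t'" for t t'
  proof -
    have t'0: "0 < t'" using t by simp
    have mis: "c (X (nn t' \<omega>) \<omega>) \<noteq> c (X t' \<omega>)" using t t'0 unfolding M1_def Mi_def by auto
    have d1: "dist (X t' \<omega>) (X (nn t' \<omega>) \<omega>) \<le> dist (X t' \<omega>) (X t \<omega>)" using nn[OF t'0] t(3) by blast
    have "margin c (X t' \<omega>) \<le> ereal (dist (X t' \<omega>) (X (nn t' \<omega>) \<omega>))"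
      unfolding margin_def using mis by (intro Inf_lower) blast
    moreover have "ereal (dist (X t' \<omega>) (X t \<omega>)) < margin c (X t' \<omega>)"
      using F(2) g[OF t(1)] g[OF t(2)] t(4) unfolding mutually_labeling_def by metis
    ultimately show False using d1 by (meson ereal_less_eq(3) leD order.trans)
  qed
  have inj: "inj_on g M1"
  proof (rule inj_onI)
    fix t t' assume "t \<in> M1" "t' \<in> M1" "g t = g t'"
    then show "t = t'" using key by (metis linorder_neqE_nat)
  qed
  have fin: "finite M1" "finite M2" unfolding M1_def M2_def Mi_def by auto
  have c1: "card M1 \<le> card F"
    using card_inj_on_le[OF inj _ F(1)] g by blast
  have c2: "card M2 \<le> card {i\<in>{..<T}. X i \<omega> \<in> UNIV - V}"
    by (intro card_mono) (auto simp: M2_def Mi_def)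
  have "Mi = M1 \<union> M2" unfolding M1_def M2_def by auto
  then have "card Mi \<le> card M1 + card M2" by (simp add: card_Un_le)
  then show ?thesis using c1 c2 unfolding mistakes_def Mi_def by linarith
qed

lemma mistakes_ennreal:
  fixes X :: "nat \<Rightarrow> 'w \<Rightarrow> 'a::metric_space"
  assumes nn: "\<And>t. 0 < t \<Longrightarrow> nn t \<omega> < t \<and> (\<forall>\<tau><t. dist (X t \<omega>) (X (nn t \<omega>) \<omega>) \<le> dist (X t \<omega>) (X \<tau> \<omega>))"
  shows "ennreal (real (mistakes c X nn T \<omega>)) \<le> ennreal_of_enat (N_ML c V) + ennreal (real (card {i\<in>{..<T}. X i \<omega> \<in> UNIV - V}))"
proof (cases "N_ML c V = \<infinity>")
  case True then show ?thesis by simp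
next
  case False
  define S where "S = {enat (card F) | F. finite F \<and> (\<forall>U\<in>F. mutually_labeling c U) \<and> V \<subseteq> \<Union>F}"
  have "N_ML c V = Inf S" unfolding N_ML_def S_def ..
  have "S \<noteq> {}"
  proof
    assume "S = {}"
    with \<open>N_ML c V = Inf S\<close> have "N_ML c V = \<infinity>" by (simp add: Inf_enat_def)
    with False show False by simp
  qed
  then have "Inf S \<in> S" unfolding Inf_enat_def by (auto intro: LeastI)
  then obtain F where F: "finite F" "\<forall>U\<in>F. mutually_labeling c U" "V \<subseteq> \<Union>F" "N_ML c V = enat (card F)"
    using \<open>N_ML c V = Inf S\<close> unfolding S_def by auto
  have "mistakes c X nn T \<omega> \<le> card F + card {i\<in>{..<T}. X i \<omega> \<in> UNIV - V}"
    by (rule mistakes_cover[where nn=nn and X=X and \<omega>=\<omega>, OF nn F(1-3)])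
  then have "ennreal (real (mistakes c X nn T \<omega>)) \<le> ennreal (real (card F + card {i\<in>{..<T}. X i \<omega> \<in> UNIV - V}))"
    by (intro ennreal_leI) simp
  also have "\<dots> = ennreal_of_enat (N_ML c V) + ennreal (real (card {i\<in>{..<T}. X i \<omega> \<in> UNIV - V}))"
    using F(4) by (simp add: ennreal_plus[symmetric] ennreal_of_nat_eq_real_of_nat del: ennreal_plus)
  finally show ?thesis .
qed




lemma num1:
  assumes p: "0 < p" "p < 1" and T: "0 < T"
  shows "exp (- 2 * (sqrt (2 * real T * ln (2 * real T / p)))^2 / real T) = (p / (2 * real T))^4"
proof -
  define x where "x = 2 * real T / p"
  have x1: "1 < x" using p T unfolding x_def by (simp add: field_simps)
  have lnx: "0 \<le> ln x" using x1 by simp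
  have "(sqrt (2 * real T * ln x))^2 = 2 * real T * ln x" using lnx by simp
  then have "- 2 * (sqrt (2 * real T * ln x))^2 / real T = - ln (x^4)"
    using T x1 by (simp add: ln_realpow)
  also have "exp (- ln (x^4)) = inverse (x^4)" using x1 by (simp add: exp_minus)
  also have "\<dots> = (p / (2 * real T))^4" unfolding x_def by (simp add: power_inverse[symmetric] inverse_divide)
  finally show ?thesis unfolding x_def .
qed

lemma num2:
  fixes p T :: real
  assumes p: "0 < p" "p < 1" and T: "1 \<le> T"
  shows "(T + 1) * (p / (2 * T))^4 \<le> p / (T * (T + 1))"
proof -
  have p3: "p^3 \<le> 1" using p by (simp add: power_le_one)
  have "(T+1)^2 \<le> 16 * T^3"
  proof -
    have "(T+1)^2 \<le> (2*T)^2" using T by (intro power_mono) auto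
    also have "\<dots> = 4 * T^2" by (simp add: power2_eq_square)
    also have "\<dots> \<le> 16 * T^3" using T by (simp add: power2_eq_square power3_eq_cube mult_left_mono)
    finally show ?thesis .
  qed
  then have "(T+1)^2 * p^3 \<le> 16 * T^3" using p3 by (smt (verit) mult_left_le zero_le_power2)
  then have "(T+1)^2 * p^3 * p \<le> 16 * T^3 * p" using p by (intro mult_right_mono) auto
  then have H: "(T+1)^2 * p^3 * p * T \<le> 16 * T^3 * p * T" proof -
    from \<open>(T+1)^2 * p^3 * p \<le> 16 * T^3 * p\<close> have "(T+1)^2 * p^3 * p \<le> 16 * T^3 * p" .
    moreover have "0 \<le> T" using T by simp
    ultimately show ?thesis by (rule mult_right_mono)
  qed
  have e1: "(T+1)*(p/(2*T))^4 = ((T+1)*p^4) / (16*T^4)"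
    by (simp add: power_divide power_mult_distrib)
  have "((T+1)*p^4)*(T*(T+1)) - p*(16*T^4) \<le> 0"
    using H by (simp add: numeral_eq_Suc algebra_simps)
  then have "((T+1)*p^4) / (16*T^4) \<le> p / (T*(T+1))"
    using T by (subst frac_le_eq) (auto intro!: divide_nonpos_pos)
  then show ?thesis using e1 by simp
qed

lemma num3:
  fixes p :: real
  shows "(\<Sum>T<N. (if T = 0 then 0 else p / (real T * (real T + 1)))) = (if N = 0 then 0 else p - p / N)"
proof (induction N)
  case 0 then show ?case by simp
next
  case (Suc N)
  show ?case
  proof (cases "N = 0")
    case True then show ?thesis by simp
  next
    case False
    have e: "p / (real N * (real N + 1)) = p / real N - p / (real (Suc N))"
      using False by (simp add: field_simps)
    show ?thesis using Suc False by (simp add: e)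
  qed
qed


theorem theorem7:
  fixes \<nu> :: "'a::metric_space measure"
    and c :: "'a \<Rightarrow> 'b"
    and \<epsilon> :: "real \<Rightarrow> real"
    and M :: "'w measure"
    and X :: "nat \<Rightarrow> 'w \<Rightarrow> 'a"
    and K :: "nat \<Rightarrow> (nat \<Rightarrow> 'a) \<Rightarrow> 'a measure"
    and nn :: "nat \<Rightarrow> 'w \<Rightarrow> nat"
    and p :: real
  assumes separable: "separable_space (euclidean :: 'a topology)"
    and nu_borel: "sets \<nu> = sets borel"
    and nu_finite: "finite_measure \<nu>"
    and boundary_null: "boundary c \<in> null_sets \<nu>"
    and eps_range: "\<And>\<delta>. \<delta> \<ge> 0 \<Longrightarrow> 0 \<le> \<epsilon> \<delta> \<and> \<epsilon> \<delta> \<le> 1"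
    and eps_dominated: "(\<epsilon> \<longlongrightarrow> 0) (at_right 0)"
    and M_prob: "prob_space M"
    and X_meas: "\<And>t. X t \<in> measurable M borel"
    and K_meas: "\<And>t. K t \<in> measurable (PiM {..<t} (\<lambda>_. borel)) (subprob_algebra borel)"
    and K_prob: "\<And>t h. h \<in> space (PiM {..<t} (\<lambda>_. borel)) \<Longrightarrow> prob_space (K t h)"
    and K_smooth: "\<And>t h A. h \<in> space (PiM {..<t} (\<lambda>_. borel)) \<Longrightarrow> A \<in> sets borel \<Longrightarrow>
                      measure (K t h) A \<le> \<epsilon> (measure \<nu> A)"
    and X_law: "\<And>t A B. A \<in> sets borel \<Longrightarrow> B \<in> sets (PiM {..<t} (\<lambda>_. borel)) \<Longrightarrow>
                   measure M {\<omega> \<in> space M. X t \<omega> \<in> A \<and> history X t \<omega> \<in> B}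
                   = (\<integral>\<omega>. indicator B (history X t \<omega>) * measure (K t (history X t \<omega>)) A \<partial>M)"
    and nn_NN: "\<And>t \<omega>. 0 < t \<Longrightarrow> \<omega> \<in> space M \<Longrightarrow>
                   nn t \<omega> < t \<and> (\<forall>\<tau><t. dist (X t \<omega>) (X (nn t \<omega>) \<omega>) \<le> dist (X t \<omega>) (X \<tau> \<omega>))"
    and p_pos: "p > 0"
  shows "\<exists>E \<in> sets M. measure M E \<ge> 1 - p \<and>
           (\<forall>\<omega>\<in>E. \<forall>T::nat.
              ennreal (real (mistakes c X nn T \<omega>))
              \<le> min (ennreal (real T))
                    (INF V\<in>sets borel. ennreal_of_enat (N_ML c V)
                        + ennreal (real T * \<epsilon> (measure \<nu> (UNIV - V)))
                        + ennreal (sqrt (2 * real T * ln (2 * real T / p)))))"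
  proof (cases "1 \<le> p")
  case True
  show ?thesis by (intro bexI[of _ "{}"]) (use True in auto)
next
  case False
  then have p1: "p < 1" by simp
  interpret P: prob_space M by (rule M_prob)
  define s where "s T = sqrt (2 * real T * ln (2 * real T / p))" for T :: nat
  define g where "g T V = ennreal_of_enat (N_ML c V) + ennreal (real T * \<epsilon> (measure \<nu> (UNIV - V))) + ennreal (s T)" for T :: nat and V
  define cT where "cT T = (INF V\<in>sets borel. g T V)" for T
  define VV where "VV T n = (SOME V. V \<in> sets borel \<and> g T V < ennreal (real n))" for T n :: nat
  define cnt where "cnt T V \<omega> = real (card {i\<in>{..<T}. X i \<omega> \<in> UNIV - V})" for T V \<omega>
  define Bad where "Bad T n = (if 0 < T \<and> cT T < ennreal (real n) then {\<omega>\<in>space M. real T * \<epsilon> (measure \<nu> (UNIV - VV T n)) + s T \<le> cnt T (VV T n) \<omega>} else {})" for T n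
  define BT where "BT T = (\<Union>n\<in>{..T}. Bad T n)" for T
  define U where "U = (\<Union>T. BT T)"
  define E where "E = space M - U"
  define b where "b T = (if T = 0 then 0 else p / (real T * (real T + 1)))" for T :: nat

  have s0: "0 \<le> s T" for T
  proof (cases "T = 0")
    case True then show ?thesis by (simp add: s_def)
  next
    case False
    have "1 \<le> 2 * real T / p" using p_pos p1 False by (simp add: field_simps)
    then have "0 \<le> ln (2 * real T / p)" by simp
    then show ?thesis unfolding s_def by simp
  qed

  have VV: "VV T n \<in> sets borel \<and> g T (VV T n) < ennreal (real n)" if "cT T < ennreal (real n)" for T n
  proof -
    from that have "\<exists>V\<in>sets borel. g T V < ennreal (real n)" unfolding cT_def by (simp add: INF_less_iff)
    then have "\<exists>V. V \<in> sets borel \<and> g T V < ennreal (real n)" by blast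
    then show ?thesis unfolding VV_def by (rule someI_ex)
  qed

  have tail: "Bad T n \<in> sets M \<and> measure M (Bad T n) \<le> (p / (2 * real T))^4" if T: "0 < T" for T n
  proof (cases "cT T < ennreal (real n)")
    case False then show ?thesis by (simp add: Bad_def)
  next
    case True
    define V where "V = VV T n"
    define q where "q = \<epsilon> (measure \<nu> (UNIV - V))"
    have Vb: "V \<in> sets borel" using VV[OF True] unfolding V_def by simp
    have Ab: "UNIV - V \<in> sets borel" using Vb by auto
    have q0: "0 \<le> q" using eps_range[of "measure \<nu> (UNIV - V)"] by (simp add: q_def)
    interpret N: nnset M X K "UNIV - V" q
    proof (unfold_locales)
      show "\<And>t. X t \<in> borel_measurable M" by (rule X_meas)
      show "UNIV - V \<in> sets borel" by (rule Ab)
      show "\<And>t h. h \<in> space (Pi\<^sub>M {..<t} (\<lambda>_. borel)) \<Longrightarrow> measure (K t h) (UNIV - V) \<le> q"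
        unfolding q_def by (rule K_smooth[OF _ Ab])
      show "0 \<le> q" by (rule q0)
      show "\<And>t A B. A \<in> sets borel \<Longrightarrow> B \<in> sets (Pi\<^sub>M {..<t} (\<lambda>_. borel)) \<Longrightarrow>
                   measure M {\<omega> \<in> space M. X t \<omega> \<in> A \<and> history X t \<omega> \<in> B}
                   = (\<integral>\<omega>. indicator B (history X t \<omega>) * measure (K t (history X t \<omega>)) A \<partial>M)"
        by (rule X_law)
    qed
    have set_eq: "Bad T n = {\<omega>\<in>space M. real T * q + s T \<le> N.Sm T \<omega>}"
    proof -
      have "N.Sm T \<omega> = cnt T V \<omega>" for \<omega> unfolding N.Sm_def cnt_def by simp
      then show ?thesis using True T unfolding Bad_def V_def q_def by simp
    qed
    have "{\<omega>\<in>space M. real T * q + s T \<le> N.Sm T \<omega>} \<in> sets M"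
      using N.Sm_meas[of T] by measurable
    moreover have "measure M {\<omega>\<in>space M. real T * q + s T \<le> N.Sm T \<omega>} \<le> exp (- 2 * (s T)^2 / real T)"
      using N.hoeff_tail[OF T s0[of T]] by simp
    moreover have "exp (- 2 * (s T)^2 / real T) = (p / (2 * real T))^4"
      unfolding s_def by (rule num1[OF p_pos p1 T])
    ultimately show ?thesis using set_eq by simp
  qed

  have BT: "BT T \<in> sets M \<and> measure M (BT T) \<le> b T" for T
  proof (cases "T = 0")
    case True
    then show ?thesis by (simp add: BT_def Bad_def b_def)
  next
    case False
    then have T: "0 < T" by simp
    have sets: "Bad T ` {..T} \<subseteq> sets M" using tail[OF T] by auto
    then have BTs: "BT T \<in> sets M" unfolding BT_def by auto
    have "measure M (BT T) \<le> (\<Sum>n\<in>{..T}. measure M (Bad T n))"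
      unfolding BT_def by (rule P.finite_measure_subadditive_finite[OF _ sets]) simp
    also have "\<dots> \<le> (\<Sum>n\<in>{..T}. (p / (2 * real T))^4)"
      using tail[OF T] by (intro sum_mono) auto
    also have "\<dots> = (real T + 1) * (p / (2 * real T))^4" by simp
    also have "\<dots> \<le> p / (real T * (real T + 1))"
      using num2[OF p_pos p1, of "real T"] T by simp
    finally show ?thesis using False BTs by (simp add: b_def)
  qed

  have b0: "0 \<le> b T" for T using p_pos by (simp add: b_def)
  have Usets: "U \<in> sets M" using BT unfolding U_def by auto
  have "emeasure M U \<le> (\<Sum>T. emeasure M (BT T))"
    unfolding U_def by (rule emeasure_subadditive_countably) (use BT in auto)
  also have "\<dots> = (SUP N. \<Sum>T<N. emeasure M (BT T))" by (rule suminf_eq_SUP)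
  also have "\<dots> \<le> ennreal p"
  proof (rule SUP_least)
    fix N :: nat
    have "(\<Sum>T<N. emeasure M (BT T)) \<le> (\<Sum>T<N. ennreal (b T))"
      using BT by (intro sum_mono) (simp add: P.emeasure_eq_measure ennreal_leI)
    also have "\<dots> = ennreal (\<Sum>T<N. b T)" using b0 by simp
    also have "(\<Sum>T<N. b T) = (if N = 0 then 0 else p - p / N)"
      unfolding b_def by (rule num3)
    also have "ennreal \<dots> \<le> ennreal p" using p_pos by (intro ennreal_leI) auto
    finally show "(\<Sum>T<N. emeasure M (BT T)) \<le> ennreal p" .
  qed
  finally have "measure M U \<le> p" using p_pos by (simp add: P.emeasure_eq_measure)
  then have Eprob: "measure M E \<ge> 1 - p" unfolding E_def using P.prob_compl[OF Usets] by simp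
  have Esets: "E \<in> sets M" unfolding E_def using Usets by auto

  have main: "ennreal (real (mistakes c X nn T \<omega>)) \<le> cT T" if w: "\<omega> \<in> E" for \<omega> T
  proof (rule ccontr)
    define m where "m = mistakes c X nn T \<omega>"
    assume "\<not> ennreal (real (mistakes c X nn T \<omega>)) \<le> cT T"
    then have lt: "cT T < ennreal (real m)" unfolding m_def by simp
    have wM: "\<omega> \<in> space M" using w unfolding E_def by simp
    have mT: "m \<le> T" unfolding m_def mistakes_def
      using card_mono[of "{..<T}" "{t. t < T \<and> (t = 0 \<or> c (X (nn t \<omega>) \<omega>) \<noteq> c (X t \<omega>))}"] by auto
    have T: "0 < T"
    proof (rule ccontr)
      assume "\<not> 0 < T" then have "m = 0" using mT by simp
      then show False using lt by simp
    qed
    have "\<omega> \<notin> Bad T m" using w mT unfolding E_def U_def BT_def by auto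
    then have notbad: "\<not> (real T * \<epsilon> (measure \<nu> (UNIV - VV T m)) + s T \<le> cnt T (VV T m) \<omega>)"
      using lt T wM unfolding Bad_def by auto
    define V where "V = VV T m"
    have gV: "g T V < ennreal (real m)" using VV[OF lt] unfolding V_def by simp
    have q0: "0 \<le> \<epsilon> (measure \<nu> (UNIV - V))" using eps_range[of "measure \<nu> (UNIV - V)"] by simp
    have "ennreal (real m) \<le> ennreal_of_enat (N_ML c V) + ennreal (cnt T V \<omega>)"
      unfolding m_def cnt_def by (rule mistakes_ennreal) (rule nn_NN[OF _ wM])
    also have "ennreal (cnt T V \<omega>) \<le> ennreal (real T * \<epsilon> (measure \<nu> (UNIV - V)) + s T)"
      using notbad unfolding V_def by (intro ennreal_leI) simp
    also have "\<dots> = ennreal (real T * \<epsilon> (measure \<nu> (UNIV - V))) + ennreal (s T)"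
      using q0 s0[of T] by (simp add: ennreal_plus)
    finally have "ennreal (real m) \<le> g T V" unfolding g_def by (simp add: add.assoc)
    then show False using gV by simp
  qed

  show ?thesis
  proof (intro bexI[of _ E] conjI ballI allI)
    show "E \<in> sets M" by (rule Esets)
    show "1 - p \<le> measure M E" by (rule Eprob)
    fix \<omega> T assume w: "\<omega> \<in> E"
    have "mistakes c X nn T \<omega> \<le> T" unfolding mistakes_def
      using card_mono[of "{..<T}" "{t. t < T \<and> (t = 0 \<or> c (X (nn t \<omega>) \<omega>) \<noteq> c (X t \<omega>))}"] by auto
    then have "ennreal (real (mistakes c X nn T \<omega>)) \<le> ennreal (real T)" by (intro ennreal_leI) simp
    moreover have "ennreal (real (mistakes c X nn T \<omega>)) \<le> cT T" by (rule main[OF w])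
    ultimately show "ennreal (real (mistakes c X nn T \<omega>))
              \<le> min (ennreal (real T))
                    (INF V\<in>sets borel. ennreal_of_enat (N_ML c V)
                        + ennreal (real T * \<epsilon> (measure \<nu> (UNIV - V)))
                        + ennreal (sqrt (2 * real T * ln (2 * real T / p))))"
      unfolding cT_def g_def s_def by simp
  qed
qed

end
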